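(* Let $T$ and $T'$ be two different host trees of a hypertree $\mathcal{H}$. Then: (1) there exist edges $e\in E(T)\setminus E(T')$ and $e'\in E(T')\setminus E(T)$ such that $T-e+e'$ is also a host tree of $\mathcal{H}$; (2) if $|E(T)\setminus E(T')|=k$, there exists a sequence $T_1,T_2,\dots,T_{k+1}$ of host trees of $\mathcal{H}$ with $T_1=T$, $T_{k+1}=T'$ and, for $1\le i\le k$, $T_{i+1}=T_i-e_i+e_i'$ where $e_i\in E(T)$ and $e_i'\in E(T')$; furthermore, there is no shorter sequence satisfying the same conditions.
   Context: A hypergraph $\mathcal{H}$ has a finite vertex set $V(\mathcal{H})$ and a finite family of nonempty subsets (edges). A host tree is a tree on $V(\mathcal{H})$ in which every edge of $\mathcal{H}$ induces a connected subgraph; a hypertree is a hypergraph with a host tree. *)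

theory Defs
  imports Main
begin

definition hypergraph :: "'a set \<Rightarrow> 'a set set \<Rightarrow> bool" where
  "hypergraph V H \<longleftrightarrow> finite V \<and> finite H \<and> (\<forall>e\<in>H. e \<noteq> {} \<and> e \<subseteq> V)"

definition graph_on :: "'a set \<Rightarrow> 'a set set \<Rightarrow> bool" where
  "graph_on V E \<longleftrightarrow> (\<forall>e\<in>E. \<exists>u v. e = {u, v} \<and> u \<noteq> v \<and> u \<in> V \<and> v \<in> V)"

definition adj_in :: "'a set set \<Rightarrow> 'a set \<Rightarrow> ('a \<times> 'a) set" where
  "adj_in E S = {(u, v). {u, v} \<in> E \<and> u \<in> S \<and> v \<in> S}"

definition induced_connected :: "'a set set \<Rightarrow> 'a set \<Rightarrow> bool" where
  "induced_connected E S \<longleftrightarrow> (\<forall>u\<in>S. \<forall>v\<in>S. (u, v) \<in> (adj_in E S)\<^sup>*)"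

definition is_cycle :: "'a set set \<Rightarrow> 'a list \<Rightarrow> bool" where
  "is_cycle E vs \<longleftrightarrow> length vs \<ge> 3 \<and> distinct vs \<and>
     (\<forall>i < length vs. {vs ! i, vs ! ((i + 1) mod length vs)} \<in> E)"

definition acyclic_graph :: "'a set set \<Rightarrow> bool" where
  "acyclic_graph E \<longleftrightarrow> \<not> (\<exists>vs. is_cycle E vs)"

definition is_tree :: "'a set \<Rightarrow> 'a set set \<Rightarrow> bool" where
  "is_tree V E \<longleftrightarrow> graph_on V E \<and> induced_connected E V \<and> acyclic_graph E"

definition host_tree :: "'a set \<Rightarrow> 'a set set \<Rightarrow> 'a set set \<Rightarrow> bool" where
  "host_tree V H T \<longleftrightarrow> is_tree V T \<and> (\<forall>e\<in>H. induced_connected T e)"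

definition hypertree :: "'a set \<Rightarrow> 'a set set \<Rightarrow> bool" where
  "hypertree V H \<longleftrightarrow> hypergraph V H \<and> (\<exists>T. host_tree V H T)"

text \<open>A sequence T_1..T_{m+1} (list of length m+1) of host trees from T to T',
  each step T_{i+1} = T_i - e_i + e_i' with e_i in E(T), e_i' in E(T').\<close>
definition swap_seq :: "'a set \<Rightarrow> 'a set set \<Rightarrow> 'a set set \<Rightarrow> 'a set set \<Rightarrow> nat \<Rightarrow> 'a set set list \<Rightarrow> bool" where
  "swap_seq V H T T' m Ts \<longleftrightarrow> length Ts = m + 1 \<and> Ts ! 0 = T \<and> Ts ! m = T' \<and>
     (\<forall>i \<le> m. host_tree V H (Ts ! i)) \<and>
     (\<forall>i < m. \<exists>e\<in>T. \<exists>e'\<in>T'. Ts ! (i + 1) = insert e' (Ts ! i - {e}))"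

end

theory Submission
  imports Defs "HOL-Library.Transitive_Closure_Table"
begin


lemma path_edges: "rtrancl_path r x xs y \<Longrightarrow> i < length xs \<Longrightarrow> r ((x#xs)!i) (xs!i)"
proof (induction arbitrary: i rule: rtrancl_path.induct)
  case (base x) then show ?case by simp
next
  case (step x y ys z) then show ?case by (cases i) auto
qed

lemma path_last: "rtrancl_path r x xs y \<Longrightarrow> xs \<noteq> [] \<Longrightarrow> last xs = y"
  by (induction rule: rtrancl_path.induct) (auto elim: rtrancl_path.cases)

lemma path_nil: "rtrancl_path r x [] y \<Longrightarrow> x = y"
  by (auto elim: rtrancl_path.cases)

lemma rt_path: assumes "(x,y) \<in> R\<^sup>*"
  obtains xs where "rtrancl_path (\<lambda>a b. (a,b) \<in> R) x xs y" "distinct (x#xs)"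
proof -
  have "(\<lambda>a b. (a,b) \<in> R)\<^sup>*\<^sup>* x y" using assms by (simp add: rtranclp_rtrancl_eq)
  then obtain xs where "rtrancl_path (\<lambda>a b. (a,b) \<in> R) x xs y" by (auto simp: rtranclp_eq_rtrancl_path)
  then show ?thesis using that by (metis rtrancl_path_distinct)
qed

lemma path_rt: "rtrancl_path (\<lambda>a b. (a,b) \<in> R) x xs y \<Longrightarrow> (x,y) \<in> R\<^sup>*"
  by (induction rule: rtrancl_path.induct) (auto intro: converse_rtrancl_into_rtrancl)

lemma adj_sym: "(a,b) \<in> adj_in E S \<Longrightarrow> (b,a) \<in> adj_in E S"
  by (auto simp: adj_in_def insert_commute)

lemma adj_rt_sym: "(a,b) \<in> (adj_in E S)\<^sup>* \<Longrightarrow> (b,a) \<in> (adj_in E S)\<^sup>*"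
proof -
  have "sym (adj_in E S)" unfolding sym_def using adj_sym by auto
  then have "sym ((adj_in E S)\<^sup>*)" by (rule sym_rtrancl)
  then show "(a,b) \<in> (adj_in E S)\<^sup>* \<Longrightarrow> (b,a) \<in> (adj_in E S)\<^sup>*" unfolding sym_def by blast
qed

lemma adj_mono: "E \<subseteq> E' \<Longrightarrow> S \<subseteq> S' \<Longrightarrow> (adj_in E S)\<^sup>* \<subseteq> (adj_in E' S')\<^sup>*"
  by (rule rtrancl_mono) (auto simp: adj_in_def)

lemma bridge:
  assumes "acyclic_graph E" "{u,v} \<in> E" "u \<noteq> v"
  shows "(u,v) \<notin> (adj_in (E - {{u,v}}) UNIV)\<^sup>*"
proof
  assume "(u,v) \<in> (adj_in (E - {{u,v}}) UNIV)\<^sup>*"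
  then obtain ys where p: "rtrancl_path (\<lambda>a b. (a,b) \<in> adj_in (E - {{u,v}}) UNIV) u ys v"
    and d: "distinct (u#ys)" by (rule rt_path)
  have ne: "ys \<noteq> []" using p path_nil assms(3) by metis
  have lv: "last ys = v" using p ne path_last by metis
  have l2: "length ys \<ge> 2"
  proof (rule ccontr)
    assume "\<not> ?thesis"
    with ne have "length ys = 1" by (cases ys) (auto simp: Suc_le_eq)
    then obtain w where "ys = [w]" by (auto simp: length_Suc_conv)
    with lv p have "(u,v) \<in> adj_in (E - {{u,v}}) UNIV" using path_edges[OF p, of 0] by auto
    then show False by (auto simp: adj_in_def)
  qed
  have "is_cycle E (u#ys)"
    unfolding is_cycle_def
  proof (intro conjI allI impI)
    show "3 \<le> length (u#ys)" using l2 by simp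
    show "distinct (u#ys)" by fact
    fix i assume i: "i < length (u#ys)"
    show "{(u # ys) ! i, (u # ys) ! ((i + 1) mod length (u # ys))} \<in> E"
    proof (cases "i < length ys")
      case True
      then have "(i+1) mod length (u#ys) = i + 1" by simp
      moreover have "((u#ys)!i, ys!i) \<in> adj_in (E - {{u,v}}) UNIV" using path_edges[OF p True] by simp
      ultimately show ?thesis by (auto simp: adj_in_def)
    next
      case False
      then have "i = length ys" using i by simp
      then have "(u#ys)!i = v" "(i+1) mod length (u#ys) = 0" using lv ne by (auto simp: last_conv_nth)
      then show ?thesis using assms(2) by (simp add: insert_commute)
    qed
  qed
  then show False using assms(1) by (auto simp: acyclic_graph_def)
qed

lemma path_avoid:
  "rtrancl_path (\<lambda>a b. (a,b) \<in> adj_in E S) y ys z \<Longrightarrow> x \<notin> set (y#ys) \<Longrightarrow>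
   (y,z) \<in> (adj_in (E - {e. x \<in> e}) UNIV)\<^sup>*"
proof (induction rule: rtrancl_path.induct)
  case (base x) then show ?case by simp
next
  case (step a b bs c)
  then have "(a,b) \<in> adj_in (E - {e. x \<in> e}) UNIV" by (auto simp: adj_in_def)
  with step show ?case by (auto intro: converse_rtrancl_into_rtrancl)
qed

lemma inter_aux:
  assumes "rtrancl_path (\<lambda>a b. (a,b) \<in> adj_in E A) u xs v" "acyclic_graph E"
  shows "distinct (u#xs) \<Longrightarrow> u \<in> B \<Longrightarrow> (u,v) \<in> (adj_in E B)\<^sup>* \<Longrightarrow> (u,v) \<in> (adj_in E (A \<inter> B))\<^sup>*"
  using assms(1)
proof (induction rule: rtrancl_path.induct)
  case (base x) then show ?case by simp
next
  case (step x y ys z)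
  have xyA: "(x,y) \<in> adj_in E A" by (rule step.hyps(1))
  have dis: "distinct (x#y#ys)" by (rule step.prems(1))
  show ?case
  proof (cases "y \<in> B")
    case True
    then have xyB: "(x,y) \<in> adj_in E B" using xyA step.prems(2) by (simp add: adj_in_def)
    have "(y,z) \<in> (adj_in E B)\<^sup>*" using adj_sym[OF xyB] step.prems(3) by (rule converse_rtrancl_into_rtrancl)
    then have "(y,z) \<in> (adj_in E (A \<inter> B))\<^sup>*" using step.IH True dis by simp
    moreover have "(x,y) \<in> adj_in E (A \<inter> B)" using xyA True step.prems(2) by (simp add: adj_in_def)
    ultimately show ?thesis by (rule converse_rtrancl_into_rtrancl[rotated])
  next
    case False
    have xy: "{x,y} \<in> E" "x \<noteq> y" using xyA dis by (auto simp: adj_in_def)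
    have sub: "(adj_in E B)\<^sup>* \<subseteq> (adj_in (E - {{x,y}}) UNIV)\<^sup>*"
    proof (rule rtrancl_mono, rule subsetI)
      fix p assume "p \<in> adj_in E B"
      then obtain a b where p: "p = (a,b)" "{a,b} \<in> E" "a \<in> B" "b \<in> B" by (auto simp: adj_in_def)
      have "{a,b} \<noteq> {x,y}"
      proof
        assume h: "{a,b} = {x,y}"
        have "y \<in> {x,y}" by simp
        then have "y \<in> {a,b}" using h by simp
        then show False using p False by blast
      qed
      then show "p \<in> adj_in (E - {{x,y}}) UNIV" using p by (simp add: adj_in_def)
    qed
    have 1: "(x,z) \<in> (adj_in (E - {{x,y}}) UNIV)\<^sup>*" using sub step.prems(3) by blast
    have "x \<notin> set (y#ys)" using dis by simp
    then have "(y,z) \<in> (adj_in (E - {e. x \<in> e}) UNIV)\<^sup>*"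
      using path_avoid[OF step.hyps(2)] by simp
    moreover have "(adj_in (E - {e. x \<in> e}) UNIV)\<^sup>* \<subseteq> (adj_in (E - {{x,y}}) UNIV)\<^sup>*"
      by (rule adj_mono) auto
    ultimately have "(y,z) \<in> (adj_in (E - {{x,y}}) UNIV)\<^sup>*" by blast
    then have "(z,y) \<in> (adj_in (E - {{x,y}}) UNIV)\<^sup>*" by (rule adj_rt_sym)
    with 1 have "(x,y) \<in> (adj_in (E - {{x,y}}) UNIV)\<^sup>*" by (rule rtrancl_trans)
    with bridge[OF assms(2) xy] show ?thesis by simp
  qed
qed

lemma inter_conn:
  assumes "acyclic_graph E" "induced_connected E A" "induced_connected E B"
  shows "induced_connected E (A \<inter> B)"
  unfolding induced_connected_def
proof (intro ballI)
  fix u v assume uv: "u \<in> A \<inter> B" "v \<in> A \<inter> B"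
  then have "(u,v) \<in> (adj_in E A)\<^sup>*" "(u,v) \<in> (adj_in E B)\<^sup>*"
    using assms by (auto simp: induced_connected_def)
  then obtain xs where "rtrancl_path (\<lambda>a b. (a,b) \<in> adj_in E A) u xs v" "distinct (u#xs)"
    by (metis rt_path)
  then show "(u,v) \<in> (adj_in E (A \<inter> B))\<^sup>*"
    using inter_aux[OF _ assms(1)] uv \<open>(u,v) \<in> (adj_in E B)\<^sup>*\<close> by blast
qed

lemma inter_conn_fin:
  assumes "finite F" "acyclic_graph E" "induced_connected E V" "\<forall>h\<in>F. induced_connected E h"
  shows "induced_connected E (V \<inter> \<Inter>F)"
  using assms(1,4)
proof (induction rule: finite_induct)
  case empty then show ?case using assms(3) by simp
next
  case (insert h F)
  have "V \<inter> \<Inter>(insert h F) = h \<inter> (V \<inter> \<Inter>F)" by auto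
  then show ?case using inter_conn[OF assms(2)] insert by auto
qed


lemma arith1: "(n::nat) \<ge> 3 \<Longrightarrow> i < n \<Longrightarrow> j = (i+1) mod n \<Longrightarrow> (j+1) mod n = i \<Longrightarrow> False"
  by (cases "i + 1 < n"; cases "i + 2 < n") (auto simp: mod_if split: if_splits)

lemma arith2: "(n::nat) \<ge> 1 \<Longrightarrow> j < n \<Longrightarrow> (j+1) mod n = j \<Longrightarrow> n = 1"
  by (cases "j + 1 < n") (auto simp: mod_if split: if_splits)

lemma arith3: "i < (n::nat) \<Longrightarrow> k + 1 < n \<Longrightarrow> (i+1+k) mod n \<noteq> i"
  by (cases "i + 1 + k < n") (auto simp: mod_if le_mod_geq)

lemma cycle_edge_distinct:
  assumes "is_cycle E vs" "i < length vs" "j < length vs" "j \<noteq> i"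
  shows "{vs!j, vs!((j+1) mod length vs)} \<noteq> {vs!i, vs!((i+1) mod length vs)}"
proof
  let ?n = "length vs"
  assume h: "{vs!j, vs!((j+1) mod ?n)} = {vs!i, vs!((i+1) mod ?n)}"
  have n3: "?n \<ge> 3" and d: "distinct vs" using assms(1) by (auto simp: is_cycle_def)
  have "?n > 0" using n3 by linarith
  then have li: "(i+1) mod ?n < ?n" "(j+1) mod ?n < ?n" by auto
  have "vs!j \<in> {vs!i, vs!((i+1) mod ?n)}" using h by (metis insertI1)
  then have "j = i \<or> j = (i+1) mod ?n" using d assms li nth_eq_iff_index_eq by auto
  then have j: "j = (i+1) mod ?n" using assms(4) by simp
  have "vs!((j+1) mod ?n) \<in> {vs!i, vs!((i+1) mod ?n)}" using h by (metis insertI1 insert_commute)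
  then have "(j+1) mod ?n = i \<or> (j+1) mod ?n = j" using d assms li j nth_eq_iff_index_eq by auto
  then show False using arith1[OF n3 assms(2) j] arith2[of ?n j] n3 assms(3) by auto
qed

lemma cycle_edge_conn:
  assumes "is_cycle E vs" "i < length vs"
  shows "(vs!((i+1) mod length vs), vs!i) \<in> (adj_in (E - {{vs!i, vs!((i+1) mod length vs)}}) UNIV)\<^sup>*"
proof -
  let ?n = "length vs"
  let ?R = "adj_in (E - {{vs!i, vs!((i+1) mod length vs)}}) UNIV"
  have n3: "?n \<ge> 3" using assms(1) by (auto simp: is_cycle_def)
  have "k + 1 \<le> ?n \<Longrightarrow> (vs!((i+1) mod ?n), vs!((i+1+k) mod ?n)) \<in> ?R\<^sup>*" for k
  proof (induction k)
    case 0 then show ?case by simp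
  next
    case (Suc k)
    define j where "j = (i+1+k) mod ?n"
    have "?n > 0" using n3 by linarith
    then have jn: "j < ?n" by (simp add: j_def)
    have ji: "j \<noteq> i" using arith3[OF assms(2), of k] Suc.prems by (simp add: j_def)
    have "{vs!j, vs!((j+1) mod ?n)} \<in> E" using assms(1) jn by (auto simp: is_cycle_def)
    moreover have "{vs!j, vs!((j+1) mod ?n)} \<noteq> {vs!i, vs!((i+1) mod ?n)}"
      by (rule cycle_edge_distinct[OF assms jn ji])
    ultimately have "(vs!j, vs!((j+1) mod ?n)) \<in> ?R" by (simp add: adj_in_def)
    moreover have "(j+1) mod ?n = (i+1+Suc k) mod ?n" by (simp add: j_def mod_Suc_eq)
    ultimately have "(vs!((i+1+k) mod ?n), vs!((i+1+Suc k) mod ?n)) \<in> ?R" by (simp add: j_def)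
    with Suc show ?case by (auto intro: rtrancl_into_rtrancl)
  qed
  from this[of "?n - 1"] n3 have "(vs!((i+1) mod ?n), vs!((i+1+(?n-1)) mod ?n)) \<in> ?R\<^sup>*" by simp
  moreover have "i+1+(?n-1) = i + ?n" using n3 by linarith
  then have "(i+1+(?n-1)) mod ?n = i" using assms(2) by simp
  ultimately show ?thesis by simp
qed



lemma tree_sub_eq:
  assumes "is_tree V T" "is_tree V T'" "T \<subseteq> T'"
  shows "T = T'"
proof (rule ccontr)
  assume "T \<noteq> T'"
  then obtain f where f: "f \<in> T'" "f \<notin> T" using assms(3) by blast
  then obtain a b where ab: "f = {a,b}" "a \<noteq> b" "a \<in> V" "b \<in> V"
    using assms(2) by (auto simp: is_tree_def graph_on_def)
  have "(a,b) \<in> (adj_in T V)\<^sup>*" using assms(1) ab by (auto simp: is_tree_def induced_connected_def)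
  moreover have "(adj_in T V)\<^sup>* \<subseteq> (adj_in (T' - {{a,b}}) UNIV)\<^sup>*"
    by (rule adj_mono) (use assms(3) f ab in auto)
  ultimately have "(a,b) \<in> (adj_in (T' - {{a,b}}) UNIV)\<^sup>*" by blast
  moreover have "acyclic_graph T'" using assms(2) by (simp add: is_tree_def)
  ultimately show False using bridge[of T' a b] f ab by blast
qed

lemma crossing:
  assumes "(a,b) \<in> R\<^sup>*" "a \<in> A" "b \<notin> A"
  shows "\<exists>x y. (x,y) \<in> R \<and> x \<in> A \<and> y \<notin> A"
  using assms by (induction rule: rtrancl_induct) blast+

lemma comp_split:
  assumes "(u,w) \<in> (adj_in T h)\<^sup>*" "u \<in> h" "v \<in> h"
  shows "(u,w) \<in> (adj_in (T - {{u,v}}) h)\<^sup>* \<or> (v,w) \<in> (adj_in (T - {{u,v}}) h)\<^sup>*"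
  using assms(1)
proof (induction rule: rtrancl_induct)
  case base then show ?case by simp
next
  case (step w w')
  show ?case
  proof (cases "{w,w'} = {u,v}")
    case True
    have "w' \<in> {w,w'}" by simp
    then have "w' = u \<or> w' = v" using True by simp
    then show ?thesis by auto
  next
    case False
    then have "(w,w') \<in> adj_in (T - {{u,v}}) h" using step.hyps(2) by (simp add: adj_in_def)
    then show ?thesis using step.IH by (meson rtrancl_into_rtrancl)
  qed
qed


lemma exchange:
  assumes fin: "finite H" and ht: "host_tree V H T" and ht': "host_tree V H T'" and eT: "e \<in> T - T'"
  shows "\<exists>e' \<in> T' - T. host_tree V H (insert e' (T - {e}))"
proof -
  have tT: "is_tree V T" and tT': "is_tree V T'" using ht ht' by (auto simp: host_tree_def)
  have acT: "acyclic_graph T" and acT': "acyclic_graph T'" using tT tT' by (auto simp: is_tree_def)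
  obtain u v where uv: "e = {u,v}" "u \<noteq> v" "u \<in> V" "v \<in> V"
    using tT eT by (auto simp: is_tree_def graph_on_def)
  define A where "A = {x. (u,x) \<in> (adj_in (T - {e}) UNIV)\<^sup>*}"
  have uA: "u \<in> A" by (simp add: A_def)
  have vA: "v \<notin> A" using bridge[OF acT _ uv(2)] uv eT by (simp add: A_def)
  have Aclosed: "y \<in> A" if "x \<in> A" "(x,y) \<in> (adj_in (T - {e}) UNIV)\<^sup>*" for x y
    using that by (auto simp: A_def)
  define F where "F = {h \<in> H. e \<subseteq> h}"
  define S where "S = V \<inter> \<Inter>F"
  have cS: "induced_connected T' S" unfolding S_def
    by (rule inter_conn_fin) (use fin ht' tT' acT' in \<open>auto simp: F_def host_tree_def is_tree_def\<close>)
  have uvS: "u \<in> S" "v \<in> S" using uv by (auto simp: S_def F_def)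
  then have "(u,v) \<in> (adj_in T' S)\<^sup>*" using cS by (simp add: induced_connected_def)
  then obtain x y where xy: "(x,y) \<in> adj_in T' S" "x \<in> A" "y \<notin> A"
    using crossing uA vA by metis
  define e' where "e' = {x,y}"
  have e'T': "e' \<in> T'" and xyS: "x \<in> S" "y \<in> S" using xy by (auto simp: adj_in_def e'_def)
  have e'T: "e' \<notin> T"
  proof
    assume "e' \<in> T"
    moreover have "e' \<noteq> e" using e'T' eT by auto
    ultimately have "(x,y) \<in> adj_in (T - {e}) UNIV" by (simp add: adj_in_def e'_def)
    then show False using Aclosed[OF xy(2)] xy(3) by blast
  qed
  define T2 where "T2 = insert e' (T - {e})"
  have conn2: "induced_connected T2 h" if ch: "induced_connected T h" and hx: "e \<subseteq> h \<Longrightarrow> x \<in> h \<and> y \<in> h" for h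
  proof (cases "e \<subseteq> h")
    case True
    then have uh: "u \<in> h" "v \<in> h" using uv by auto
    have xh: "x \<in> h" "y \<in> h" using hx True by auto
    let ?C = "(adj_in (T - {e}) h)\<^sup>*"
    let ?D = "(adj_in T2 h)\<^sup>*"
    have CD: "?C \<subseteq> ?D" by (rule adj_mono) (auto simp: T2_def)
    have CU: "?C \<subseteq> (adj_in (T - {e}) UNIV)\<^sup>*" by (rule adj_mono) auto
    have sp: "(u,w) \<in> ?C \<or> (v,w) \<in> ?C" if "w \<in> h" for w
    proof -
      have "(u,w) \<in> (adj_in T h)\<^sup>*" using ch uh that by (simp add: induced_connected_def)
      then show ?thesis using comp_split[OF _ uh] uv(1) by simp
    qed
    have "(u,x) \<in> ?C"
    proof (rule ccontr)
      assume "(u,x) \<notin> ?C"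
      then have "(v,x) \<in> ?C" using sp[OF xh(1)] by blast
      then have "(v,x) \<in> (adj_in (T - {e}) UNIV)\<^sup>*" using CU by blast
      then have "(x,v) \<in> (adj_in (T - {e}) UNIV)\<^sup>*" by (rule adj_rt_sym)
      then show False using Aclosed[OF xy(2)] vA by blast
    qed
    moreover have "(v,y) \<in> ?C"
    proof (rule ccontr)
      assume "(v,y) \<notin> ?C"
      then have "(u,y) \<in> ?C" using sp[OF xh(2)] by blast
      then have "(u,y) \<in> (adj_in (T - {e}) UNIV)\<^sup>*" using CU by blast
      then show False using xy(3) by (simp add: A_def)
    qed
    moreover have xy2: "(x,y) \<in> adj_in T2 h" using xh by (simp add: adj_in_def T2_def e'_def)
    ultimately have ux: "(u,x) \<in> ?D" and vy: "(v,y) \<in> ?D" and xy2: "(x,y) \<in> adj_in T2 h"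
      using CD by (blast, blast, blast)
    have "(u,y) \<in> ?D" using ux xy2 by (rule rtrancl_into_rtrancl)
    moreover have "(y,v) \<in> ?D" using vy by (rule adj_rt_sym)
    ultimately have uv2: "(u,v) \<in> ?D" by (rule rtrancl_trans)
    have uw: "(u,w) \<in> ?D" if "w \<in> h" for w
    proof (cases "(u,w) \<in> ?C")
      case True then show ?thesis using CD by blast
    next
      case False
      then have "(v,w) \<in> ?D" using sp[OF that] CD by blast
      with uv2 show ?thesis by (rule rtrancl_trans)
    qed
    show ?thesis unfolding induced_connected_def
    proof (intro ballI)
      fix a b assume ab: "a \<in> h" "b \<in> h"
      have "(a,u) \<in> ?D" using uw[OF ab(1)] by (rule adj_rt_sym)
      moreover have "(u,b) \<in> ?D" using uw[OF ab(2)] .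
      ultimately show "(a,b) \<in> ?D" by (rule rtrancl_trans)
    qed
  next
    case False
    have "(adj_in T h)\<^sup>* \<subseteq> (adj_in T2 h)\<^sup>*"
    proof (rule rtrancl_mono, rule subsetI)
      fix p assume "p \<in> adj_in T h"
      then obtain a b where p: "p = (a,b)" "{a,b} \<in> T" "a \<in> h" "b \<in> h" by (auto simp: adj_in_def)
      have "{a,b} \<subseteq> h" using p by simp
      then have "{a,b} \<noteq> e" using False by metis
      then show "p \<in> adj_in T2 h" using p by (simp add: adj_in_def T2_def)
    qed
    then show ?thesis using ch unfolding induced_connected_def by blast
  qed
  have g2: "graph_on V T2" using tT tT' e'T' by (auto simp: T2_def is_tree_def graph_on_def)
  have c2: "induced_connected T2 V"
    by (rule conn2) (use tT xyS in \<open>auto simp: is_tree_def S_def\<close>)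
  have h2: "\<forall>h\<in>H. induced_connected T2 h"
  proof
    fix h assume hH: "h \<in> H"
    show "induced_connected T2 h"
    proof (rule conn2)
      show "induced_connected T h" using ht hH by (simp add: host_tree_def)
      assume "e \<subseteq> h"
      then have "h \<in> F" using hH by (simp add: F_def)
      then show "x \<in> h \<and> y \<in> h" using xyS by (auto simp: S_def)
    qed
  qed
  have a2: "acyclic_graph T2" unfolding acyclic_graph_def
  proof
    assume "\<exists>vs. is_cycle T2 vs"
    then obtain vs where cyc: "is_cycle T2 vs" by blast
    let ?n = "length vs"
    show False
    proof (cases "\<exists>i < ?n. {vs!i, vs!((i+1) mod ?n)} = e'")
      case True
      then obtain i where i: "i < ?n" "{vs!i, vs!((i+1) mod ?n)} = e'" by blast
      have "(vs!((i+1) mod ?n), vs!i) \<in> (adj_in (T2 - {e'}) UNIV)\<^sup>*"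
        using cycle_edge_conn[OF cyc i(1)] i(2) by simp
      moreover have "(adj_in (T2 - {e'}) UNIV)\<^sup>* \<subseteq> (adj_in (T - {e}) UNIV)\<^sup>*"
        by (rule adj_mono) (auto simp: T2_def)
      ultimately have r: "(vs!((i+1) mod ?n), vs!i) \<in> (adj_in (T - {e}) UNIV)\<^sup>*" by blast
      have "(vs!i = x \<and> vs!((i+1) mod ?n) = y) \<or> (vs!i = y \<and> vs!((i+1) mod ?n) = x)"
        using i(2) unfolding e'_def by (simp add: doubleton_eq_iff)
      then have "(x,y) \<in> (adj_in (T - {e}) UNIV)\<^sup>*"
      proof
        assume "vs!i = x \<and> vs!((i+1) mod ?n) = y"
        then show ?thesis using adj_rt_sym[OF r] by simp
      next
        assume "vs!i = y \<and> vs!((i+1) mod ?n) = x"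
        then show ?thesis using r by simp
      qed
      then show False using Aclosed[OF xy(2)] xy(3) by blast
    next
      case False
      have "is_cycle T vs" using cyc False unfolding is_cycle_def T2_def by auto
      then show False using acT by (auto simp: acyclic_graph_def)
    qed
  qed
  have "host_tree V H T2" using g2 c2 h2 a2 by (simp add: host_tree_def is_tree_def)
  then show ?thesis using e'T' e'T by (auto simp: T2_def)
qed



lemma host_fin: "finite V \<Longrightarrow> host_tree V H X \<Longrightarrow> finite X"
proof -
  assume f: "finite V" and h: "host_tree V H X"
  have "X \<subseteq> Pow V" using h by (auto simp: host_tree_def is_tree_def graph_on_def)
  then show "finite X" using f by (meson finite_Pow_iff finite_subset)
qed

lemma seq_exists:
  assumes fV: "finite V" and fH: "finite H" and ht': "host_tree V H T'"
  shows "\<forall>T. host_tree V H T \<longrightarrow> card (T - T') = k \<longrightarrow> T - T' \<subseteq> X \<longrightarrow>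
    (\<exists>Ts. length Ts = k + 1 \<and> Ts ! 0 = T \<and> Ts ! k = T' \<and> (\<forall>i \<le> k. host_tree V H (Ts ! i)) \<and>
      (\<forall>i < k. \<exists>e\<in>X. \<exists>e'\<in>T'. Ts ! (i + 1) = insert e' (Ts ! i - {e})))"
proof (induction k)
  case 0
  show ?case
  proof (intro allI impI)
    fix T assume ht: "host_tree V H T" and c: "card (T - T') = 0" and "T - T' \<subseteq> X"
    have "finite (T - T')" using host_fin[OF fV ht] by simp
    then have "T \<subseteq> T'" using c by simp
    then have "T = T'" using tree_sub_eq ht ht' by (auto simp: host_tree_def)
    then show "\<exists>Ts. length Ts = 0 + 1 \<and> Ts ! 0 = T \<and> Ts ! 0 = T' \<and> (\<forall>i \<le> 0. host_tree V H (Ts ! i)) \<and>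
      (\<forall>i < 0. \<exists>e\<in>X. \<exists>e'\<in>T'. Ts ! (i + 1) = insert e' (Ts ! i - {e}))"
      using ht by (intro exI[of _ "[T]"]) simp
  qed
next
  case (Suc k)
  show ?case
  proof (intro allI impI)
    fix T assume ht: "host_tree V H T" and c: "card (T - T') = Suc k" and sX: "T - T' \<subseteq> X"
    have fT: "finite (T - T')" using host_fin[OF fV ht] by simp
    obtain e where eT: "e \<in> T - T'" using c by (metis card.empty ex_in_conv nat.distinct(1))
    obtain e' where e': "e' \<in> T' - T" and ht1: "host_tree V H (insert e' (T - {e}))"
      using exchange[OF fH ht ht' eT] by blast
    define T1 where "T1 = insert e' (T - {e})"
    have "T1 - T' = (T - T') - {e}" using e' by (auto simp: T1_def)
    then have c1: "card (T1 - T') = k" and s1: "T1 - T' \<subseteq> X" using c fT eT sX by auto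
    have ex: "\<exists>Ts. length Ts = k + 1 \<and> Ts ! 0 = T1 \<and> Ts ! k = T' \<and> (\<forall>i \<le> k. host_tree V H (Ts ! i)) \<and>
      (\<forall>i < k. \<exists>e\<in>X. \<exists>e'\<in>T'. Ts ! (i + 1) = insert e' (Ts ! i - {e}))"
      by (rule mp[OF mp[OF mp[OF spec[OF Suc.IH, of T1]]]]) (use ht1 c1 s1 in \<open>simp_all add: T1_def\<close>)
    from ex obtain Ts where TsC: "length Ts = k + 1 \<and> Ts ! 0 = T1 \<and> Ts ! k = T' \<and> (\<forall>i \<le> k. host_tree V H (Ts ! i)) \<and>
      (\<forall>i < k. \<exists>e\<in>X. \<exists>e'\<in>T'. Ts ! (i + 1) = insert e' (Ts ! i - {e}))" by (rule exE)
    note Ts = TsC[THEN conjunct1] TsC[THEN conjunct2, THEN conjunct1]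
      TsC[THEN conjunct2, THEN conjunct2, THEN conjunct1]
      TsC[THEN conjunct2, THEN conjunct2, THEN conjunct2, THEN conjunct1]
      TsC[THEN conjunct2, THEN conjunct2, THEN conjunct2, THEN conjunct2]
    show "\<exists>Ts. length Ts = Suc k + 1 \<and> Ts ! 0 = T \<and> Ts ! Suc k = T' \<and> (\<forall>i \<le> Suc k. host_tree V H (Ts ! i)) \<and>
      (\<forall>i < Suc k. \<exists>e\<in>X. \<exists>e'\<in>T'. Ts ! (i + 1) = insert e' (Ts ! i - {e}))"
    proof (intro exI[of _ "T # Ts"] conjI allI impI)
      show "length (T # Ts) = Suc k + 1" using Ts by simp
      show "(T # Ts) ! 0 = T" by simp
      show "(T # Ts) ! Suc k = T'" using Ts by simp
      fix i
      show "i \<le> Suc k \<Longrightarrow> host_tree V H ((T # Ts) ! i)" using Ts ht by (cases i) auto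
      show "i < Suc k \<Longrightarrow> \<exists>e\<in>X. \<exists>e'\<in>T'. (T # Ts) ! (i + 1) = insert e' ((T # Ts) ! i - {e})"
      proof (cases i)
        case 0
        then show ?thesis using Ts(2) eT sX e' by (auto simp: T1_def)
      next
        case (Suc j)
        assume "i < Suc k"
        then have "j < k" using Suc by simp
        then have "\<exists>e\<in>X. \<exists>e'\<in>T'. Ts ! (j + 1) = insert e' (Ts ! j - {e})"
          by (rule mp[OF spec[OF Ts(5)]])
        then show ?thesis using Suc by simp
      qed
    qed
  qed
qed

lemma seq_lower:
  assumes fV: "finite V" and s: "swap_seq V H T T' m Ts"
  shows "card (T - T') \<le> m"
proof -
  have Ts: "Ts ! 0 = T" "Ts ! m = T'" "\<forall>i \<le> m. host_tree V H (Ts ! i)"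
    "\<forall>i < m. \<exists>e\<in>T. \<exists>e'\<in>T'. Ts ! (i + 1) = insert e' (Ts ! i - {e})"
    using s by (auto simp: swap_seq_def)
  have "i \<le> m \<Longrightarrow> card (T - T') \<le> card (Ts ! i - T') + i" for i
  proof (induction i)
    case 0 then show ?case using Ts by simp
  next
    case (Suc i)
    have "i < m" using Suc.prems by simp
    have ex: "\<exists>e\<in>T. \<exists>e'\<in>T'. Ts ! (i + 1) = insert e' (Ts ! i - {e})"
      by (rule mp[OF spec[OF Ts(4), of i]]) fact
    then obtain e e' where ee: "Ts ! (i + 1) = insert e' (Ts ! i - {e})" by (elim bexE)
    have "host_tree V H (Ts ! i)" "host_tree V H (Ts ! (i+1))" using Ts(3) Suc.prems by simp_all
    then have f: "finite (Ts ! i - T')" and f1: "finite (Ts ! (i+1) - T')"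
      using host_fin[OF fV] by blast+
    have "Ts ! i - T' - {e} \<subseteq> Ts ! (i+1) - T'" using ee by auto
    then have "card (Ts ! i - T' - {e}) \<le> card (Ts ! (i+1) - T')" using f1 by (rule card_mono[rotated])
    moreover have "card (Ts ! i - T') \<le> card (Ts ! i - T' - {e}) + 1"
    proof (cases "e \<in> Ts ! i - T'")
      case True
      then show ?thesis using f by (simp add: card_Diff_singleton)
    next
      case False
      then show ?thesis by simp
    qed
    moreover have "card (T - T') \<le> card (Ts ! i - T') + i" using Suc.IH Suc.prems by simp
    ultimately have "card (T - T') \<le> card (Ts ! (i+1) - T') + (i + 1)" by linarith
    then show ?case by simp
  qed
  from this[of m] show ?thesis using Ts by simp
qed

theorem mainTheorem19:
  fixes V :: "'a set" and H T T' :: "'a set set"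
  assumes "hypertree V H"
    and "host_tree V H T" and "host_tree V H T'" and "T \<noteq> T'"
  shows "(\<exists>e \<in> T - T'. \<exists>e' \<in> T' - T. host_tree V H (insert e' (T - {e})))
    \<and> (\<forall>k. card (T - T') = k \<longrightarrow>
          (\<exists>Ts. swap_seq V H T T' k Ts) \<and> (\<forall>m Ts. swap_seq V H T T' m Ts \<longrightarrow> k \<le> m))"
proof -
  have fV: "finite V" and fH: "finite H" using assms(1) by (auto simp: hypertree_def hypergraph_def)
  have "\<not> T \<subseteq> T'"
  proof
    assume "T \<subseteq> T'"
    then have "T = T'" by (rule tree_sub_eq[of V, rotated 2]) (use assms(2,3) in \<open>simp_all add: host_tree_def\<close>)
    then show False using assms(4) by simp
  qed
  then obtain e where eT: "e \<in> T - T'" by blast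
  have P1: "\<exists>e \<in> T - T'. \<exists>e' \<in> T' - T. host_tree V H (insert e' (T - {e}))"
    using exchange[OF fH assms(2,3) eT] eT by (rule bexI)
  have P2: "\<exists>Ts. swap_seq V H T T' k Ts" if "card (T - T') = k" for k
    unfolding swap_seq_def
    by (rule mp[OF mp[OF mp[OF spec[OF seq_exists[OF fV fH assms(3), of k T], of T]]]])
       (use that assms(2) in simp_all)
  have P3: "k \<le> m" if "card (T - T') = k" "swap_seq V H T T' m Ts" for k m Ts
    using seq_lower[OF fV that(2)] that(1) by simp
  show ?thesis
  proof (intro conjI allI impI)
    show "\<exists>e \<in> T - T'. \<exists>e' \<in> T' - T. host_tree V H (insert e' (T - {e}))" by (rule P1)
    fix k assume k: "card (T - T') = k"
    show "\<exists>Ts. swap_seq V H T T' k Ts" using k by (rule P2)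
    fix m Ts assume "swap_seq V H T T' m Ts"
    then show "k \<le> m" using P3 k by blast
  qed
qed


end
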